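(* Let $N\ge 2$. (Complex case.) Let $R$ be an $N\times N$ complex correlation matrix (Hermitian positive definite with unit diagonal), with Cholesky factorisation $R=LL^*$, $L$ lower triangular with positive diagonal, and let $\theta_{jp}\in(0,\pi)$ ($2\le j\le N$, $1\le p\le 2j-2$) be the angles with $$l_{jk}=\left(\cos\theta_{j,2k-1}+i\cos\theta_{j,2k}\sin\theta_{j,2k-1}\right)\prod_{p=1}^{2k-2}\sin\theta_{jp}\ (1\le k\le j-1),\qquad l_{jj}=\prod_{p=1}^{2j-2}\sin\theta_{jp}.$$ For $1\le k<j\le N$, let $R_{11}$ be the leading $(k-1)\times(k-1)$ principal block of $R$, $R/R_{11}=R_{22}-R_{21}R_{11}^{-1}R_{12}$ the Schur complement (indexed by $k,\dots,N$; equal to $R$ if $k=1$), and $\rho_{jk|\{1,\dots,k-1\}}=(R/R_{11})_{jk}\big/\big((R/R_{11})_{jj}(R/R_{11})_{kk}\big)^{1/2}$. Then $$\rho_{jk|\{1,\dots,k-1\}}=\cos\theta_{j,2k-1}+i\cos\theta_{j,2k}\sin\theta_{j,2k-1}.$$ (Quaternion case.) Let $R$ be an $N\times N$ quaternion correlation matrix, i.e. a $2N\times2N$ complex Hermitian positive definite matrix composed of $2\times 2$ blocks of the form $\begin{bmatrix}z&w\\-\bar w&\bar z\end{bmatrix}$ with diagonal blocks $I_2$, with block Cholesky factorisation $R=LL^*$, $L$ block lower triangular of the same block form with diagonal blocks $l_{jj}I_2$, $l_{jj}>0$. For an off-diagonal block $l_{jk}$ with parameters $(z,w)$ write $l^{(1)}_{jk}=\mathrm{Re}\,z$,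 $l^{(2)}_{jk}=\mathrm{Im}\,z$, $l^{(3)}_{jk}=\mathrm{Re}\,w$, $l^{(4)}_{jk}=\mathrm{Im}\,w$, and let $\theta_{jp}\in(0,\pi)$ ($2\le j\le N$, $1\le p\le 4j-4$) be the angles with $$l_{jk}^{(s)}=\cos\theta_{j,4(k-1)+s}\left(\prod_{m=1}^{s-1}\sin\theta_{j,4(k-1)+m}\right)\prod_{p=1}^{4(k-1)}\sin\theta_{jp}\ (1\le k\le j-1,\,1\le s\le4),\qquad l_{jj}=\prod_{p=1}^{4(j-1)}\sin\theta_{jp}.$$ For $1\le k<j\le N$ define the $2\times2$ block $\rho_{jk|\{1,\dots,k-1\}}=(R/R_{11})_{jk}\big/\big((R/R_{11})_{jj}(R/R_{11})_{kk}\big)^{1/2}$, where $R_{11}$ is the leading $2(k-1)\times2(k-1)$ principal block, $(R/R_{11})_{jk}$ denotes the $(j,k)$ $2\times2$ block of the Schur complement $R/R_{11}$, and the diagonal blocks $(R/R_{11})_{jj}$, $(R/R_{11})_{kk}$ are positive scalar multiples of $I_2$ (identified with those scalars). Then $$\rho_{jk|\{1,\dots,k-1\}}=\begin{bmatrix}z_{jk}&w_{jk}\\-\bar w_{jk}&\bar z_{jk}\end{bmatrix},$$ with $z_{jk}=\cos\theta_{j,4k-3}+i\cos\theta_{j,4k-2}\sin\theta_{j,4k-3}$ and $w_{jk}=\left(\cos\theta_{j,4k-1}+i\cos\theta_{j,4k}\sin\theta_{j,4k-1}\right)\sin\theta_{j,4k-3}\sin\theta_{j,4k-2}$.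
   Context: Empty products equal $1$; $L^*$ denotes conjugate transpose. The angles in each row are uniquely determined since each row of real coordinates of $L$ is a unit vector with positive last coordinate $l_{jj}$. *)

theory Defs
  imports "Jordan_Normal_Form.Schur_Decomposition"
begin

text \<open>Matrices are Jordan_Normal_Form matrices with 0-based indices;
  the paper's 1-based entry (j,k) is entry (j-1,k-1).\<close>

definition hermitian_mat :: "complex mat \<Rightarrow> bool" where
  "hermitian_mat A \<longleftrightarrow> dim_row A = dim_col A \<and> mat_adjoint A = A"

definition pos_def_mat :: "complex mat \<Rightarrow> bool" where
  "pos_def_mat A \<longleftrightarrow> hermitian_mat A \<and>
     (\<forall>x :: nat \<Rightarrow> complex. (\<exists>i < dim_row A. x i \<noteq> 0) \<longrightarrow>
        (let q = (\<Sum>i<dim_row A. \<Sum>j<dim_row A. cnj (x i) * A $$ (i, j) * x j)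
         in q \<in> \<real> \<and> 0 < Re q))"

definition inv_mat :: "complex mat \<Rightarrow> complex mat" where
  "inv_mat A = (SOME B. B \<in> carrier_mat (dim_row A) (dim_row A) \<and>
       A * B = 1\<^sub>m (dim_row A) \<and> B * A = 1\<^sub>m (dim_row A))"

text \<open>Schur complement R/R11 of the leading m x m principal block R11 of an
  n x n matrix A (indexed from 0, i.e. its (i,j) entry corresponds to the
  (m+i, m+j) entry of A).  For m = 0 it equals A.\<close>
definition schur_compl :: "complex mat \<Rightarrow> nat \<Rightarrow> complex mat" where
  "schur_compl A m =
    (let n = dim_row A;
         A11 = mat m m (\<lambda>(a, b). A $$ (a, b));
         A12 = mat m (n - m) (\<lambda>(a, b). A $$ (a, m + b));
         A21 = mat (n - m) m (\<lambda>(a, b). A $$ (m + a, b));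
         A22 = mat (n - m) (n - m) (\<lambda>(a, b). A $$ (m + a, m + b))
     in A22 - A21 * inv_mat A11 * A12)"

definition quat_block_form :: "complex mat \<Rightarrow> nat \<Rightarrow> bool" where
  "quat_block_form A n \<longleftrightarrow> A \<in> carrier_mat (2 * n) (2 * n) \<and>
     (\<forall>a < n. \<forall>b < n. A $$ (2 * a + 1, 2 * b) = - cnj (A $$ (2 * a, 2 * b + 1)) \<and>
                       A $$ (2 * a + 1, 2 * b + 1) = cnj (A $$ (2 * a, 2 * b)))"

text \<open>Real coordinates l^(s)_{jk} (s = 1..4, paper's 1-based block indices j, k)
  of the block (j,k) with parameters (z,w): Re z, Im z, Re w, Im w.\<close>
definition qcoord :: "complex mat \<Rightarrow> nat \<Rightarrow> nat \<Rightarrow> nat \<Rightarrow> real" where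
  "qcoord L j k s =
     (if s = 1 then Re (L $$ (2 * (j - 1), 2 * (k - 1)))
      else if s = 2 then Im (L $$ (2 * (j - 1), 2 * (k - 1)))
      else if s = 3 then Re (L $$ (2 * (j - 1), 2 * (k - 1) + 1))
      else Im (L $$ (2 * (j - 1), 2 * (k - 1) + 1)))"

end

theory Submission
  imports Defs
begin

lemma adj_idx: "i < dim_col A \<Longrightarrow> j < dim_row A \<Longrightarrow> mat_adjoint A $$ (i,j) = cnj (A $$ (j,i))"
  and adj_dim: "dim_row (mat_adjoint A) = dim_col A" "dim_col (mat_adjoint A) = dim_row A"
  by (auto simp: mat_adjoint_def mat_of_rows_def)

lemma adj_carrier: "(A :: complex mat) \<in> carrier_mat n m \<Longrightarrow> mat_adjoint A \<in> carrier_mat m n"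
  unfolding carrier_mat_def by (simp add: adj_dim)

lemma mult_adj_idx: "i < dim_row A \<Longrightarrow> j < dim_row B \<Longrightarrow> dim_col A = dim_col B \<Longrightarrow>
   (A * mat_adjoint B) $$ (i,j) = (\<Sum>c<dim_col A. A $$ (i,c) * cnj (B $$ (j,c)))"
  by (auto simp: adj_dim adj_idx scalar_prod_def lessThan_atLeast0 intro!: sum.cong)

lemma sum_split_nat: "(m::nat) \<le> n \<Longrightarrow> (\<Sum>c<n. f c) = (\<Sum>c<m. f c) + (\<Sum>c<n-m. f (m+c))"
proof (induction n)
  case 0
  then show ?case by simp
next
  case (Suc n)
  show ?case
  proof (cases "m \<le> n")
    case True
    have e: "Suc n - m = Suc (n - m)" using True by simp
    have "(\<Sum>c<Suc n. f c) = (\<Sum>c<n. f c) + f n" by simp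
    also have "\<dots> = (\<Sum>c<m. f c) + (\<Sum>c<n-m. f (m+c)) + f n" using Suc.IH[OF True] by simp
    also have "\<dots> = (\<Sum>c<m. f c) + (\<Sum>c<Suc n-m. f (m+c))" unfolding e using True by (simp add: add.assoc)
    finally show ?thesis .
  next
    case False
    then have "m = Suc n" using Suc.prems by simp
    then show ?thesis by simp
  qed
qed

lemma schur_chol:
  fixes L :: "complex mat"
  assumes L: "L \<in> carrier_mat n n"
   and lt: "\<forall>i<n. \<forall>j<n. i<j \<longrightarrow> L$$(i,j) = 0"
   and dg: "\<forall>i<n. L$$(i,i) \<noteq> 0"
   and R: "R = L * mat_adjoint L"
   and m: "m \<le> n" and a: "a < n-m" and b: "b < n-m"
  shows "schur_compl R m $$ (a,b) = (\<Sum>c<n-m. L$$(m+a,m+c) * cnj (L$$(m+b,m+c)))"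
proof -
  have Rdim: "dim_row R = n" using R L by (simp add: adj_dim)
  have Ridx: "R $$ (i,j) = (\<Sum>c<n. L$$(i,c) * cnj (L$$(j,c)))" if "i<n" "j<n" for i j
    using R L that by (simp add: mult_adj_idx)
  define L11 where "L11 = mat m m (\<lambda>(i,j). L$$(i,j))"
  define L21 where "L21 = mat (n-m) m (\<lambda>(i,j). L$$(m+i,j))"
  have C11: "L11 \<in> carrier_mat m m" and C21: "L21 \<in> carrier_mat (n-m) m"
    by (auto simp: L11_def L21_def)
  have h11: "mat m m (\<lambda>(i,j). R$$(i,j)) = L11 * mat_adjoint L11"
  proof (rule eq_matI)
    fix i j assume ij: "i < dim_row (L11 * mat_adjoint L11)" "j < dim_col (L11 * mat_adjoint L11)"
    hence i: "i < m" and j: "j < m" by (auto simp: L11_def adj_dim)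
    have "R$$(i,j) = (\<Sum>c<m. L$$(i,c) * cnj (L$$(j,c))) + (\<Sum>c<n-m. L$$(i,m+c) * cnj (L$$(j,m+c)))"
      using Ridx[of i j] i j m sum_split_nat[OF m] by simp
    also have "(\<Sum>c<n-m. L$$(i,m+c) * cnj (L$$(j,m+c))) = 0"
      using lt i m by (intro sum.neutral) auto
    finally show "mat m m (\<lambda>(i,j). R$$(i,j)) $$ (i,j) = (L11 * mat_adjoint L11) $$ (i,j)"
      using i j by (simp add: mult_adj_idx L11_def)
  qed (auto simp: L11_def adj_dim)
  have h12: "mat m (n-m) (\<lambda>(i,j). R$$(i,m+j)) = L11 * mat_adjoint L21"
  proof (rule eq_matI)
    fix i j assume ij: "i < dim_row (L11 * mat_adjoint L21)" "j < dim_col (L11 * mat_adjoint L21)"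
    hence i: "i < m" and j: "j < n-m" by (auto simp: L11_def L21_def adj_dim)
    have "R$$(i,m+j) = (\<Sum>c<m. L$$(i,c) * cnj (L$$(m+j,c))) + (\<Sum>c<n-m. L$$(i,m+c) * cnj (L$$(m+j,m+c)))"
      using Ridx[of i "m+j"] i j m sum_split_nat[OF m] by simp
    also have "(\<Sum>c<n-m. L$$(i,m+c) * cnj (L$$(m+j,m+c))) = 0"
      using lt i m by (intro sum.neutral) auto
    finally show "mat m (n-m) (\<lambda>(i,j). R$$(i,m+j)) $$ (i,j) = (L11 * mat_adjoint L21) $$ (i,j)"
      using i j by (simp add: mult_adj_idx L11_def L21_def)
  qed (auto simp: L11_def L21_def adj_dim)
  have h21: "mat (n-m) m (\<lambda>(i,j). R$$(m+i,j)) = L21 * mat_adjoint L11"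
  proof (rule eq_matI)
    fix i j assume ij: "i < dim_row (L21 * mat_adjoint L11)" "j < dim_col (L21 * mat_adjoint L11)"
    hence i: "i < n-m" and j: "j < m" by (auto simp: L11_def L21_def adj_dim)
    have "R$$(m+i,j) = (\<Sum>c<m. L$$(m+i,c) * cnj (L$$(j,c))) + (\<Sum>c<n-m. L$$(m+i,m+c) * cnj (L$$(j,m+c)))"
      using Ridx[of "m+i" j] i j m sum_split_nat[OF m] by simp
    also have "(\<Sum>c<n-m. L$$(m+i,m+c) * cnj (L$$(j,m+c))) = 0"
      using lt j m by (intro sum.neutral) auto
    finally show "mat (n-m) m (\<lambda>(i,j). R$$(m+i,j)) $$ (i,j) = (L21 * mat_adjoint L11) $$ (i,j)"
      using i j by (simp add: mult_adj_idx L11_def L21_def)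
  qed (auto simp: L11_def L21_def adj_dim)
  define A11 where "A11 = L11 * mat_adjoint L11"
  have CA: "A11 \<in> carrier_mat m m" unfolding A11_def by (rule mult_carrier_mat[OF C11 adj_carrier[OF C11]])
  have dL: "det L11 \<noteq> 0"
  proof -
    have "det L11 = prod_list (diag_mat L11)"
      by (rule det_lower_triangular[OF _ C11]) (use lt m in \<open>auto simp: L11_def\<close>)
    moreover have "0 \<notin> set (diag_mat L11)"
      using dg m by (auto simp: diag_mat_def L11_def)
    ultimately show ?thesis by (simp add: prod_list_zero_iff)
  qed
  have dLa: "det (mat_adjoint L11) \<noteq> 0"
  proof -
    have Ca: "mat_adjoint L11 \<in> carrier_mat m m" using C11 by (rule adj_carrier)
    have "det (mat_adjoint L11) = prod_list (diag_mat (mat_adjoint L11))"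
      by (rule det_upper_triangular[OF _ Ca]) (use lt m C11 in \<open>auto simp: upper_triangular_def L11_def adj_idx adj_dim\<close>)
    moreover have "0 \<notin> set (diag_mat (mat_adjoint L11))"
      using dg m C11 by (auto simp: diag_mat_def L11_def adj_idx adj_dim)
    ultimately show ?thesis by (simp add: prod_list_zero_iff)
  qed
  have dA: "det A11 \<noteq> 0" unfolding A11_def
    using det_mult[OF C11 adj_carrier[OF C11]] dL dLa by simp
  obtain B' where B': "B' \<in> carrier_mat m m" "A11 * B' = 1\<^sub>m m" "B' * A11 = 1\<^sub>m m"
    using det_non_zero_imp_unit[OF CA dA, of undefined]
    unfolding Units_def ring_mat_def by auto
  define B where "B = inv_mat A11"
  have B: "B \<in> carrier_mat m m" "A11 * B = 1\<^sub>m m" "B * A11 = 1\<^sub>m m"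
    unfolding B_def inv_mat_def using someI[of "\<lambda>B. B \<in> carrier_mat (dim_row A11) (dim_row A11) \<and>
       A11 * B = 1\<^sub>m (dim_row A11) \<and> B * A11 = 1\<^sub>m (dim_row A11)" B'] B' CA by auto
  obtain Li where Li: "Li \<in> carrier_mat m m" "L11 * Li = 1\<^sub>m m" "Li * L11 = 1\<^sub>m m"
    using det_non_zero_imp_unit[OF C11 dL, of undefined]
    unfolding Units_def ring_mat_def by auto
  have Ca: "mat_adjoint L11 \<in> carrier_mat m m" using C11 by (rule adj_carrier)
  have Ca21: "mat_adjoint L21 \<in> carrier_mat m (n-m)" using C21 by (rule adj_carrier)
  have CX: "mat_adjoint L11 * B \<in> carrier_mat m m" by (rule mult_carrier_mat[OF Ca B(1)])
  have "Li = Li * (A11 * B)" using B(2) Li(1) by simp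
  also have "A11 * B = L11 * (mat_adjoint L11 * B)"
    unfolding A11_def by (rule assoc_mult_mat[OF C11 Ca B(1)])
  also have "Li * (L11 * (mat_adjoint L11 * B)) = (Li * L11) * (mat_adjoint L11 * B)"
    by (rule assoc_mult_mat[OF Li(1) C11 CX, symmetric])
  also have "\<dots> = mat_adjoint L11 * B" unfolding Li(3) using CX by (rule left_mult_one_mat)
  finally have k1: "mat_adjoint L11 * B = Li" ..
  have k2: "mat_adjoint L11 * B * L11 = 1\<^sub>m m" unfolding k1 by (rule Li(3))
  have k3: "L21 * mat_adjoint L11 * B * (L11 * mat_adjoint L21) = L21 * mat_adjoint L21"
  proof -
    have CY: "L21 * mat_adjoint L11 * B \<in> carrier_mat (n-m) m"
      using mult_carrier_mat[OF mult_carrier_mat[OF C21 Ca] B(1)] .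
    have e1: "L21 * mat_adjoint L11 * B * (L11 * mat_adjoint L21) = (L21 * mat_adjoint L11 * B * L11) * mat_adjoint L21"
      by (rule assoc_mult_mat[OF CY C11 Ca21, symmetric])
    have e2a: "L21 * mat_adjoint L11 * B = L21 * (mat_adjoint L11 * B)"
      by (rule assoc_mult_mat[OF C21 Ca B(1)])
    have e2b: "L21 * (mat_adjoint L11 * B) * L11 = L21 * (mat_adjoint L11 * B * L11)"
      by (rule assoc_mult_mat[OF C21 CX C11])
    have e2: "L21 * mat_adjoint L11 * B * L11 = L21"
      unfolding e2a e2b k2 using C21 by (rule right_mult_one_mat)
    show ?thesis unfolding e1 e2 ..
  qed
  have S: "schur_compl R m = mat (n-m) (n-m) (\<lambda>(i,j). R$$(m+i,m+j)) - L21 * mat_adjoint L21"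
    unfolding schur_compl_def Let_def Rdim h11 h12 h21 A11_def[symmetric] B_def[symmetric] k3 ..
  have "schur_compl R m $$ (a,b) = R$$(m+a,m+b) - (\<Sum>c<m. L$$(m+a,c) * cnj (L$$(m+b,c)))"
  proof -
    have "(L21 * mat_adjoint L21) $$ (a,b) = (\<Sum>c<m. L21$$(a,c) * cnj (L21$$(b,c)))"
      using mult_adj_idx[of a L21 b L21] C21 a b by simp
    also have "\<dots> = (\<Sum>c<m. L$$(m+a,c) * cnj (L$$(m+b,c)))"
      using a b by (intro sum.cong) (auto simp: L21_def)
    finally show ?thesis unfolding S using a b C21 by (simp add: adj_dim)
  qed
  also have "\<dots> = (\<Sum>c<n-m. L$$(m+a,m+c) * cnj (L$$(m+b,m+c)))"
    using Ridx[of "m+a" "m+b"] a b sum_split_nat[OF m, of "\<lambda>c. L$$(m+a,c) * cnj (L$$(m+b,c))"] by simp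
  finally show ?thesis .
qed


lemma trig2: "(cos a * Q)^2 + (cos b * sin a * Q)^2 = Q^2 - (Q * sin a * sin b)^2" for a b Q :: real
proof -
  have A: "sin a^2 = 1 - cos a^2" and B: "sin b^2 = 1 - cos b^2" by (simp_all add: sin_squared_eq)
  show ?thesis by (simp add: power_mult_distrib A B algebra_simps)
qed

lemma prod_Suc2: "(\<Prod>p\<in>{1..Suc (Suc n)}. f p) = (\<Prod>p\<in>{1..n}. f p) * f (Suc n) * f (Suc (Suc n))" for f :: "nat \<Rightarrow> real"
  by (simp add: prod.cl_ivl_Suc)

lemma tele_c:
  fixes t :: "nat \<Rightarrow> real" and l :: "nat \<Rightarrow> complex"
  assumes F: "\<forall>kk\<in>{1..<j}. l kk = (complex_of_real (cos (t (2*kk-1))) + \<i> * complex_of_real (cos (t (2*kk)) * sin (t (2*kk-1)))) * complex_of_real (\<Prod>p\<in>{1..2*kk-2}. sin (t p))"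
  and D: "l j = complex_of_real (\<Prod>p\<in>{1..2*j-2}. sin (t p))"
  shows "1 \<le> k \<Longrightarrow> k \<le> j \<Longrightarrow> (\<Sum>c<j-k+1. (cmod (l (k+c)))^2) = (\<Prod>p\<in>{1..2*k-2}. sin (t p))^2"
proof (induction "j-k" arbitrary: k)
  case 0
  then have "k = j" by simp
  then show ?case using D by (simp del: of_real_prod add: power2_abs)
next
  case (Suc d)
  then have kj: "k < j" and k1: "1 \<le> k" by auto
  have IH: "(\<Sum>c<j-(k+1)+1. (cmod (l ((k+1)+c)))^2) = (\<Prod>p\<in>{1..2*(k+1)-2}. sin (t p))^2"
    by (rule Suc.hyps(1)) (use Suc.hyps(2) kj in auto)
  have e: "j-k+1 = Suc (j-(k+1)+1)" using kj by simp
  have "(\<Sum>c<j-k+1. (cmod (l (k+c)))^2) = (cmod (l k))^2 + (\<Sum>c<j-(k+1)+1. (cmod (l ((k+1)+c)))^2)"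
    unfolding e sum.lessThan_Suc_shift by simp
  also have "\<dots> = (cmod (l k))^2 + (\<Prod>p\<in>{1..2*k}. sin (t p))^2" using IH by simp
  also have "(cmod (l k))^2 = (cos (t (2*k-1)) * (\<Prod>p\<in>{1..2*k-2}. sin (t p)))^2 + (cos (t (2*k)) * sin (t (2*k-1)) * (\<Prod>p\<in>{1..2*k-2}. sin (t p)))^2"
    using F kj k1 by (simp del: of_real_prod add: cmod_power2)
  also have "\<dots> = (\<Prod>p\<in>{1..2*k-2}. sin (t p))^2 - ((\<Prod>p\<in>{1..2*k-2}. sin (t p)) * sin (t (2*k-1)) * sin (t (2*k)))^2"
    by (rule trig2)
  also have "(\<Prod>p\<in>{1..2*k-2}. sin (t p)) * sin (t (2*k-1)) * sin (t (2*k)) = (\<Prod>p\<in>{1..2*k}. sin (t p))"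
  proof -
    obtain k0 where k0: "k = Suc k0" using k1 by (cases k) auto
    have "2*k = Suc (Suc (2*k0))" "2*k-1 = Suc (2*k0)" "2*k-2 = 2*k0" using k0 by auto
    then show ?thesis by (simp only: prod_Suc2)
  qed
  finally show ?case by simp
qed



lemma sum_first: "(\<forall>c::nat\<in>{1..<n}. f c = 0) \<Longrightarrow> 0 < (n::nat) \<Longrightarrow> (\<Sum>c<n. f c) = (f 0 :: 'a::comm_monoid_add)"
proof -
  assume h: "\<forall>c\<in>{1..<n}. f c = 0" and n: "0 < n"
  obtain n0 where n0: "n = Suc n0" using n by (cases n) auto
  have "(\<Sum>c<n. f c) = f 0 + (\<Sum>c<n0. f (Suc c))" unfolding n0 sum.lessThan_Suc_shift ..
  also have "(\<Sum>c<n0. f (Suc c)) = 0" using h n0 by (intro sum.neutral) auto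
  finally show ?thesis by simp
qed

lemma cplx:
  fixes R L :: "complex mat" and \<theta> :: "nat \<Rightarrow> nat \<Rightarrow> real"
  assumes L: "L \<in> carrier_mat N N" and lt: "\<forall>i < N. \<forall>j < N. i < j \<longrightarrow> L $$ (i, j) = 0"
   and dpos: "\<forall>i < N. \<exists>r > 0. L $$ (i, i) = complex_of_real r"
   and RL: "R = L * mat_adjoint L"
   and th: "\<forall>j \<in> {2..N}. \<forall>p \<in> {1..2 * j - 2}. 0 < \<theta> j p \<and> \<theta> j p < pi"
   and form: "\<forall>j \<in> {2..N}.
        (\<forall>k \<in> {1..j - 1}. L $$ (j - 1, k - 1) =
           (complex_of_real (cos (\<theta> j (2 * k - 1))) +
            \<i> * complex_of_real (cos (\<theta> j (2 * k)) * sin (\<theta> j (2 * k - 1)))) *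
           complex_of_real (\<Prod>p \<in> {1..2 * k - 2}. sin (\<theta> j p))) \<and>
        L $$ (j - 1, j - 1) = complex_of_real (\<Prod>p \<in> {1..2 * j - 2}. sin (\<theta> j p))"
   and jk: "1 \<le> k" "k < j" "j \<le> N"
  shows "(let S = schur_compl R (k - 1)
          in S $$ (j - k, 0) /
               complex_of_real (sqrt (Re (S $$ (j - k, j - k)) * Re (S $$ (0, 0))))
             = complex_of_real (cos (\<theta> j (2 * k - 1))) +
               \<i> * complex_of_real (cos (\<theta> j (2 * k)) * sin (\<theta> j (2 * k - 1))))"
proof -
  define S where "S = schur_compl R (k - 1)"
  define z where "z = complex_of_real (cos (\<theta> j (2 * k - 1))) +
               \<i> * complex_of_real (cos (\<theta> j (2 * k)) * sin (\<theta> j (2 * k - 1)))"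
  define Q where "Q = (\<Prod>p \<in> {1..2 * k - 2}. sin (\<theta> j p))"
  have j2: "j \<in> {2..N}" using jk by auto
  have "k - 1 < N" using jk by simp
  then obtain r where r: "r > 0" "L $$ (k-1, k-1) = complex_of_real r" using dpos by blast
  have Qpos: "Q > 0" unfolding Q_def
  proof (rule prod_pos)
    fix p assume p: "p \<in> {1..2*k-2}"
    then have "p \<in> {1..2*j-2}" using jk by auto
    then show "0 < sin (\<theta> j p)" using th j2 by (intro sin_gt_zero) auto
  qed
  have dg: "\<forall>i<N. L$$(i,i) \<noteq> 0" using dpos by force
  have SC: "\<And>a b. a < N-(k-1) \<Longrightarrow> b < N-(k-1) \<Longrightarrow> S $$ (a,b) = (\<Sum>c<N-(k-1). L$$((k-1)+a,(k-1)+c) * cnj (L$$((k-1)+b,(k-1)+c)))"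
    unfolding S_def using schur_chol[OF L lt dg RL] jk by simp
  have Lz: "L$$(j-1,k-1) = z * complex_of_real Q"
    using form j2 jk unfolding z_def Q_def by auto
  have S1: "S $$ (j-k, 0) = L$$(j-1,k-1) * complex_of_real r"
  proof -
    have "S $$ (j-k, 0) = (\<Sum>c<N-(k-1). L$$((k-1)+(j-k),(k-1)+c) * cnj (L$$((k-1)+0,(k-1)+c)))"
      using SC jk by simp
    also have "\<dots> = L$$((k-1)+(j-k),(k-1)+0) * cnj (L$$((k-1)+0,(k-1)+0))"
      by (rule sum_first) (use lt jk in auto)
    finally show ?thesis using r jk by simp
  qed
  have S2: "S $$ (0, 0) = complex_of_real (r^2)"
  proof -
    have "S $$ (0, 0) = (\<Sum>c<N-(k-1). L$$((k-1)+0,(k-1)+c) * cnj (L$$((k-1)+0,(k-1)+c)))"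
      using SC jk by simp
    also have "\<dots> = L$$((k-1)+0,(k-1)+0) * cnj (L$$((k-1)+0,(k-1)+0))"
      by (rule sum_first) (use lt jk in auto)
    finally show ?thesis using r jk by (simp add: power2_eq_square)
  qed
  have S3: "S $$ (j-k, j-k) = complex_of_real (Q^2)"
  proof -
    have "S $$ (j-k, j-k) = (\<Sum>c<N-(k-1). L$$((k-1)+(j-k),(k-1)+c) * cnj (L$$((k-1)+(j-k),(k-1)+c)))"
      using SC jk by simp
    also have "\<dots> = (\<Sum>c<N-(k-1). complex_of_real ((cmod (L$$(j-1,(k-1)+c)))^2))"
      using jk by (intro sum.cong refl) (simp add: complex_norm_square[symmetric] del: of_real_power)
    also have "\<dots> = complex_of_real (\<Sum>c<N-(k-1). (cmod (L$$(j-1,(k-1)+c)))^2)"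
      by simp
    also have "(\<Sum>c<N-(k-1). (cmod (L$$(j-1,(k-1)+c)))^2) = (\<Sum>c<j-k+1. (cmod (L$$(j-1,(k-1)+c)))^2) + (\<Sum>c<N-(k-1)-(j-k+1). (cmod (L$$(j-1,(k-1)+((j-k+1)+c))))^2)"
      by (rule sum_split_nat) (use jk in auto)
    also have "(\<Sum>c<N-(k-1)-(j-k+1). (cmod (L$$(j-1,(k-1)+((j-k+1)+c))))^2) = 0"
      using lt jk by (intro sum.neutral) auto
    also have "(\<Sum>c<j-k+1. (cmod (L$$(j-1,(k-1)+c)))^2) = (\<Sum>c<j-k+1. (cmod ((\<lambda>kk. L$$(j-1,kk-1)) (k+c)))^2)"
      using jk by (intro sum.cong) auto
    also have "\<dots> = Q^2" unfolding Q_def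
    proof (rule tele_c[where t = "\<theta> j"])
      show "\<forall>kk\<in>{1..<j}. L$$(j-1,kk-1) = (complex_of_real (cos (\<theta> j (2*kk-1))) + \<i> * complex_of_real (cos (\<theta> j (2*kk)) * sin (\<theta> j (2*kk-1)))) * complex_of_real (\<Prod>p\<in>{1..2*kk-2}. sin (\<theta> j p))"
        using form j2 by auto
      show "L$$(j-1,j-1) = complex_of_real (\<Prod>p\<in>{1..2*j-2}. sin (\<theta> j p))"
        using form j2 by auto
    qed (use jk in auto)
    finally show ?thesis by simp
  qed
  have "sqrt (Re (S $$ (j - k, j - k)) * Re (S $$ (0, 0))) = Q * r"
    unfolding S2 S3 using Qpos r by (simp add: real_sqrt_mult)
  then have "S $$ (j - k, 0) / complex_of_real (sqrt (Re (S $$ (j - k, j - k)) * Re (S $$ (0, 0)))) = z"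
    unfolding S1 Lz using Qpos r by (simp add: field_simps)
  then show ?thesis unfolding S_def z_def Let_def .
qed


lemma trig4: "(cos a * Q)^2 + (cos b * sin a * Q)^2 + (cos c * (sin a * sin b) * Q)^2 + (cos d * (sin a * sin b * sin c) * Q)^2
   = Q^2 - (Q * sin a * sin b * sin c * sin d)^2" for a b c d Q :: real
proof -
  have A: "sin a^2 = 1 - cos a^2" and B: "sin b^2 = 1 - cos b^2" and C: "sin c^2 = 1 - cos c^2"
    and D: "sin d^2 = 1 - cos d^2" by (simp_all add: sin_squared_eq)
  show ?thesis by (simp add: power_mult_distrib A B C D algebra_simps)
qed

lemma prod_Suc4: "(\<Prod>p\<in>{1..4*k0+4}. f p) = (\<Prod>p\<in>{1..4*k0}. f p) * f (4*k0+1) * f (4*k0+2) * f (4*k0+3) * f (4*k0+4)" for f :: "nat \<Rightarrow> real"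
proof -
  have e: "4*k0+4 = Suc (Suc (Suc (Suc (4*k0))))" "4*k0+3 = Suc (Suc (Suc (4*k0)))"
    "4*k0+2 = Suc (Suc (4*k0))" "4*k0+1 = Suc (4*k0)" by simp_all
  show ?thesis unfolding e by (simp add: prod.cl_ivl_Suc)
qed

lemma tele_q:
  fixes t :: "nat \<Rightarrow> real" and l :: "nat \<Rightarrow> complex"
  assumes H: "\<forall>k0<j0. Re (l (2*k0)) = cos (t (4*k0+1)) * (\<Prod>p\<in>{1..4*k0}. sin (t p)) \<and>
      Im (l (2*k0)) = cos (t (4*k0+2)) * sin (t (4*k0+1)) * (\<Prod>p\<in>{1..4*k0}. sin (t p)) \<and>
      Re (l (2*k0+1)) = cos (t (4*k0+3)) * (sin (t (4*k0+1)) * sin (t (4*k0+2))) * (\<Prod>p\<in>{1..4*k0}. sin (t p)) \<and>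
      Im (l (2*k0+1)) = cos (t (4*k0+4)) * (sin (t (4*k0+1)) * sin (t (4*k0+2)) * sin (t (4*k0+3))) * (\<Prod>p\<in>{1..4*k0}. sin (t p))"
  and D: "l (2*j0) = complex_of_real (\<Prod>p\<in>{1..4*j0}. sin (t p))"
  shows "k0 \<le> j0 \<Longrightarrow> (\<Sum>c<2*(j0-k0)+1. (cmod (l (2*k0+c)))^2) = (\<Prod>p\<in>{1..4*k0}. sin (t p))^2"
proof (induction "j0-k0" arbitrary: k0)
  case 0
  then have "k0 = j0" by simp
  then show ?case using D by (simp del: of_real_prod add: power2_abs)
next
  case (Suc d)
  then have kj: "k0 < j0" by auto
  have IH: "(\<Sum>c<2*(j0-(k0+1))+1. (cmod (l (2*(k0+1)+c)))^2) = (\<Prod>p\<in>{1..4*(k0+1)}. sin (t p))^2"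
    by (rule Suc.hyps(1)) (use Suc.hyps(2) kj in auto)
  have e: "2*(j0-k0)+1 = Suc (Suc (2*(j0-(k0+1))+1))" using kj by simp
  have "(\<Sum>c<2*(j0-k0)+1. (cmod (l (2*k0+c)))^2) = (cmod (l (2*k0)))^2 + (cmod (l (2*k0+1)))^2 + (\<Sum>c<2*(j0-(k0+1))+1. (cmod (l (2*(k0+1)+c)))^2)"
    unfolding e sum.lessThan_Suc_shift by (simp add: add.assoc)
  also have "\<dots> = (cmod (l (2*k0)))^2 + (cmod (l (2*k0+1)))^2 + (\<Prod>p\<in>{1..4*k0+4}. sin (t p))^2"
  proof -
    have e4: "4*(k0+1) = 4*k0+4" by simp
    show ?thesis by (simp only: IH[unfolded e4])
  qed
  also have "(cmod (l (2*k0)))^2 + (cmod (l (2*k0+1)))^2 = 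
     (cos (t (4*k0+1)) * (\<Prod>p\<in>{1..4*k0}. sin (t p)))^2 + (cos (t (4*k0+2)) * sin (t (4*k0+1)) * (\<Prod>p\<in>{1..4*k0}. sin (t p)))^2
     + (cos (t (4*k0+3)) * (sin (t (4*k0+1)) * sin (t (4*k0+2))) * (\<Prod>p\<in>{1..4*k0}. sin (t p)))^2
     + (cos (t (4*k0+4)) * (sin (t (4*k0+1)) * sin (t (4*k0+2)) * sin (t (4*k0+3))) * (\<Prod>p\<in>{1..4*k0}. sin (t p)))^2"
    using H kj by (simp add: cmod_power2 add.assoc)
  also have "\<dots> = (\<Prod>p\<in>{1..4*k0}. sin (t p))^2 - ((\<Prod>p\<in>{1..4*k0}. sin (t p)) * sin (t (4*k0+1)) * sin (t (4*k0+2)) * sin (t (4*k0+3)) * sin (t (4*k0+4)))^2"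
    by (rule trig4)
  also have "(\<Prod>p\<in>{1..4*k0}. sin (t p)) * sin (t (4*k0+1)) * sin (t (4*k0+2)) * sin (t (4*k0+3)) * sin (t (4*k0+4)) = (\<Prod>p\<in>{1..4*k0+4}. sin (t p))"
    by (rule prod_Suc4[symmetric])
  finally show ?case by simp
qed



lemma sum_second: "f 0 = 0 \<Longrightarrow> (\<forall>c::nat\<in>{2..<n}. f c = 0) \<Longrightarrow> 1 < (n::nat) \<Longrightarrow> (\<Sum>c<n. f c) = (f 1 :: 'a::comm_monoid_add)"
proof -
  assume h0: "f 0 = 0" and h: "\<forall>c\<in>{2..<n}. f c = 0" and n: "1 < n"
  obtain n0 where n0: "n = Suc (Suc n0)" using n by (cases n; cases "n - 1") auto
  have "(\<Sum>c<n. f c) = f 0 + (f 1 + (\<Sum>c<n0. f (Suc (Suc c))))" unfolding n0 sum.lessThan_Suc_shift by simp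
  also have "(\<Sum>c<n0. f (Suc (Suc c))) = 0" using h n0 by (intro sum.neutral) auto
  finally show ?thesis using h0 by simp
qed

lemma quat_lt:
  fixes L :: "complex mat"
  assumes Q: "quat_block_form L N"
   and lo: "\<forall>a < N. \<forall>b < N. a < b \<longrightarrow> L $$ (2 * a, 2 * b) = 0 \<and> L $$ (2 * a, 2 * b + 1) = 0"
   and dg: "\<forall>a < N. (\<exists>r > 0. L $$ (2 * a, 2 * a) = complex_of_real r) \<and> L $$ (2 * a, 2 * a + 1) = 0"
  shows "\<forall>i<2*N. \<forall>j<2*N. i<j \<longrightarrow> L$$(i,j) = 0" and "\<forall>i<2*N. L$$(i,i) \<noteq> 0"
proof -
  have QB: "\<forall>a < N. \<forall>b < N. L $$ (2 * a + 1, 2 * b) = - cnj (L $$ (2 * a, 2 * b + 1)) \<and>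
                       L $$ (2 * a + 1, 2 * b + 1) = cnj (L $$ (2 * a, 2 * b))"
    using Q unfolding quat_block_form_def by blast
  have dv: "\<And>i::nat. i = 2 * (i div 2) \<or> i = 2 * (i div 2) + 1" by presburger
  show "\<forall>i<2*N. \<forall>j<2*N. i<j \<longrightarrow> L$$(i,j) = 0"
  proof (intro allI impI)
    fix i j assume i: "i < 2*N" and j: "j < 2*N" and ij: "i < j"
    define a where "a = i div 2"
    define b where "b = j div 2"
    have a: "a < N" and b: "b < N" using i j by (auto simp: a_def b_def)
    have ab: "a \<le> b" using ij by (simp add: a_def b_def div_le_mono)
    show "L$$(i,j) = 0"
    proof (cases "a < b")
      case True
      then show ?thesis using dv[of i] dv[of j] lo QB a b unfolding a_def[symmetric] b_def[symmetric] by auto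
    next
      case False
      then have "a = b" using ab by simp
      then have "i = 2*a" "j = 2*a+1" using dv[of i] dv[of j] ij unfolding a_def[symmetric] b_def[symmetric] by auto
      then show ?thesis using dg a by auto
    qed
  qed
  show "\<forall>i<2*N. L$$(i,i) \<noteq> 0"
  proof (intro allI impI)
    fix i assume i: "i < 2*N"
    define a where "a = i div 2"
    have a: "a < N" using i by (auto simp: a_def)
    obtain r where r: "r > 0" "L $$ (2 * a, 2 * a) = complex_of_real r" using dg a by blast
    have "L $$ (2 * a + 1, 2 * a + 1) = complex_of_real r" using QB a r by simp
    then show "L$$(i,i) \<noteq> 0" using dv[of i] r unfolding a_def[symmetric] by auto
  qed
qed


lemma set12: "{1..2::nat} = {1,2}" and set12': "{Suc 0..2::nat} = {1,2}" and set13: "{1..3::nat} = {1,2,3}" and set13': "{Suc 0..3::nat} = {1,2,3}" by auto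

lemma qc_expand:
  fixes t :: "nat \<Rightarrow> real"
  assumes h: "\<forall>s\<in>{1..4::nat}. qcoord L (Suc j0) (Suc k0) s = cos (t (4*(Suc k0-1)+s)) * (\<Prod>m\<in>{1..s-1}. sin (t (4*(Suc k0-1)+m))) * (\<Prod>p\<in>{1..4*(Suc k0-1)}. sin (t p))"
  shows "Re (L$$(2*j0,2*k0)) = cos (t (4*k0+1)) * (\<Prod>p\<in>{1..4*k0}. sin (t p)) \<and>
      Im (L$$(2*j0,2*k0)) = cos (t (4*k0+2)) * sin (t (4*k0+1)) * (\<Prod>p\<in>{1..4*k0}. sin (t p)) \<and>
      Re (L$$(2*j0,2*k0+1)) = cos (t (4*k0+3)) * (sin (t (4*k0+1)) * sin (t (4*k0+2))) * (\<Prod>p\<in>{1..4*k0}. sin (t p)) \<and>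
      Im (L$$(2*j0,2*k0+1)) = cos (t (4*k0+4)) * (sin (t (4*k0+1)) * sin (t (4*k0+2)) * sin (t (4*k0+3))) * (\<Prod>p\<in>{1..4*k0}. sin (t p))"
proof -
  have h1: "qcoord L (Suc j0) (Suc k0) 1 = cos (t (4*k0+1)) * (\<Prod>p\<in>{1..4*k0}. sin (t p))"
    using h[rule_format, of 1] by simp
  have h2: "qcoord L (Suc j0) (Suc k0) 2 = cos (t (4*k0+2)) * sin (t (4*k0+1)) * (\<Prod>p\<in>{1..4*k0}. sin (t p))"
    using h[rule_format, of 2] by simp
  have h3: "qcoord L (Suc j0) (Suc k0) 3 = cos (t (4*k0+3)) * (sin (t (4*k0+1)) * sin (t (4*k0+2))) * (\<Prod>p\<in>{1..4*k0}. sin (t p))"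
    using h[rule_format, of 3] by (simp add: set12 set12')
  have h4: "qcoord L (Suc j0) (Suc k0) 4 = cos (t (4*k0+4)) * (sin (t (4*k0+1)) * sin (t (4*k0+2)) * sin (t (4*k0+3))) * (\<Prod>p\<in>{1..4*k0}. sin (t p))"
    using h[rule_format, of 4] by (simp add: set13 set13' mult.assoc)
  show ?thesis using h1 h2 h3 h4 by (simp add: qcoord_def)
qed



lemma quat:
  fixes R L :: "complex mat" and \<theta> :: "nat \<Rightarrow> nat \<Rightarrow> real"
  assumes QL: "quat_block_form L N"
   and lo: "\<forall>a < N. \<forall>b < N. a < b \<longrightarrow> L $$ (2 * a, 2 * b) = 0 \<and> L $$ (2 * a, 2 * b + 1) = 0"
   and dgl: "\<forall>a < N. (\<exists>r > 0. L $$ (2 * a, 2 * a) = complex_of_real r) \<and> L $$ (2 * a, 2 * a + 1) = 0"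
   and RL: "R = L * mat_adjoint L"
   and th: "\<forall>j \<in> {2..N}. \<forall>p \<in> {1..4 * j - 4}. 0 < \<theta> j p \<and> \<theta> j p < pi"
   and form: "\<forall>j \<in> {2..N}.
        (\<forall>k \<in> {1..j - 1}. \<forall>s \<in> {1..4}. qcoord L j k s =
           cos (\<theta> j (4 * (k - 1) + s)) *
           (\<Prod>m \<in> {1..s - 1}. sin (\<theta> j (4 * (k - 1) + m))) *
           (\<Prod>p \<in> {1..4 * (k - 1)}. sin (\<theta> j p))) \<and>
        L $$ (2 * (j - 1), 2 * (j - 1)) = complex_of_real (\<Prod>p \<in> {1..4 * (j - 1)}. sin (\<theta> j p))"
   and jk: "1 \<le> k" "k < j" "j \<le> N"
  shows "(let S = schur_compl R (2 * (k - 1));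
              d = complex_of_real (sqrt (Re (S $$ (2 * (j - k), 2 * (j - k))) * Re (S $$ (0, 0))));
              z = complex_of_real (cos (\<theta> j (4 * k - 3))) +
                  \<i> * complex_of_real (cos (\<theta> j (4 * k - 2)) * sin (\<theta> j (4 * k - 3)));
              w = (complex_of_real (cos (\<theta> j (4 * k - 1))) +
                   \<i> * complex_of_real (cos (\<theta> j (4 * k)) * sin (\<theta> j (4 * k - 1)))) *
                  complex_of_real (sin (\<theta> j (4 * k - 3)) * sin (\<theta> j (4 * k - 2)))
          in S $$ (2 * (j - k), 0) / d = z \<and>
             S $$ (2 * (j - k), 1) / d = w \<and>
             S $$ (2 * (j - k) + 1, 0) / d = - cnj w \<and>
             S $$ (2 * (j - k) + 1, 1) / d = cnj z)"
proof -
  obtain k0 where k0: "k = Suc k0" using jk by (cases k) auto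
  obtain j0 where j0: "j = Suc j0" using jk by (cases j) auto
  have kj: "k0 < j0" "j0 < N" using jk k0 j0 by auto
  have j2: "j \<in> {2..N}" using jk by auto
  define t where "t = \<theta> j"
  define S where "S = schur_compl R (2 * k0)"
  define Q where "Q = (\<Prod>p \<in> {1..4 * k0}. sin (t p))"
  define z where "z = complex_of_real (cos (t (4 * k0 + 1))) +
                  \<i> * complex_of_real (cos (t (4 * k0 + 2)) * sin (t (4 * k0 + 1)))"
  define w where "w = (complex_of_real (cos (t (4 * k0 + 3))) +
                   \<i> * complex_of_real (cos (t (4 * k0 + 4)) * sin (t (4 * k0 + 3)))) *
                  complex_of_real (sin (t (4 * k0 + 1)) * sin (t (4 * k0 + 2)))"
  have L: "L \<in> carrier_mat (2*N) (2*N)" using QL unfolding quat_block_form_def by blast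
  have QB: "\<forall>a < N. \<forall>b < N. L $$ (2 * a + 1, 2 * b) = - cnj (L $$ (2 * a, 2 * b + 1)) \<and>
                       L $$ (2 * a + 1, 2 * b + 1) = cnj (L $$ (2 * a, 2 * b))"
    using QL unfolding quat_block_form_def by blast
  note lt = quat_lt(1)[OF QL lo dgl] and dg = quat_lt(2)[OF QL lo dgl]
  have k0N: "k0 < N" and j0N: "j0 < N" using kj by auto
  obtain r where r: "r > 0" "L $$ (2*k0, 2*k0) = complex_of_real r" using dgl[rule_format, OF k0N] by blast
  have r01: "L $$ (2*k0, 2*k0+1) = 0" using dgl[rule_format, OF k0N] by blast
  have r10: "L $$ (2*k0+1, 2*k0) = 0" using QB[rule_format, OF k0N k0N] r01 by simp
  have r11: "L $$ (2*k0+1, 2*k0+1) = complex_of_real r" using QB[rule_format, OF k0N k0N] r by simp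
  have Qpos: "Q > 0" unfolding Q_def
  proof (rule prod_pos)
    fix p assume p: "p \<in> {1..4*k0}"
    then have "p \<in> {1..4*j-4}" using kj j0 by auto
    then show "0 < sin (t p)" using th j2 unfolding t_def by (intro sin_gt_zero) auto
  qed
  have SC: "\<And>a b. a < 2*N-2*k0 \<Longrightarrow> b < 2*N-2*k0 \<Longrightarrow> S $$ (a,b) = (\<Sum>c<2*N-2*k0. L$$(2*k0+a,2*k0+c) * cnj (L$$(2*k0+b,2*k0+c)))"
    unfolding S_def using schur_chol[OF L lt dg RL] kj by simp
  have A: "2*k0 + 2*(j0-k0) = 2*j0" using kj by simp
  have qc: "\<forall>k\<in>{1..j-1}. \<forall>s\<in>{1..4::nat}. qcoord L j k s = cos (t (4*(k-1)+s)) * (\<Prod>m\<in>{1..s-1}. sin (t (4*(k-1)+m))) * (\<Prod>p\<in>{1..4*(k-1)}. sin (t p))"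
    using form j2 unfolding t_def by blast
  have HH: "\<forall>k0'<j0. Re (L$$(2*j0,2*k0')) = cos (t (4*k0'+1)) * (\<Prod>p\<in>{1..4*k0'}. sin (t p)) \<and>
      Im (L$$(2*j0,2*k0')) = cos (t (4*k0'+2)) * sin (t (4*k0'+1)) * (\<Prod>p\<in>{1..4*k0'}. sin (t p)) \<and>
      Re (L$$(2*j0,2*k0'+1)) = cos (t (4*k0'+3)) * (sin (t (4*k0'+1)) * sin (t (4*k0'+2))) * (\<Prod>p\<in>{1..4*k0'}. sin (t p)) \<and>
      Im (L$$(2*j0,2*k0'+1)) = cos (t (4*k0'+4)) * (sin (t (4*k0'+1)) * sin (t (4*k0'+2)) * sin (t (4*k0'+3))) * (\<Prod>p\<in>{1..4*k0'}. sin (t p))"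
  proof (intro allI impI)
    fix k0' assume "k0' < j0"
    then have "Suc k0' \<in> {1..j-1}" using j0 by auto
    then show "Re (L$$(2*j0,2*k0')) = cos (t (4*k0'+1)) * (\<Prod>p\<in>{1..4*k0'}. sin (t p)) \<and>
      Im (L$$(2*j0,2*k0')) = cos (t (4*k0'+2)) * sin (t (4*k0'+1)) * (\<Prod>p\<in>{1..4*k0'}. sin (t p)) \<and>
      Re (L$$(2*j0,2*k0'+1)) = cos (t (4*k0'+3)) * (sin (t (4*k0'+1)) * sin (t (4*k0'+2))) * (\<Prod>p\<in>{1..4*k0'}. sin (t p)) \<and>
      Im (L$$(2*j0,2*k0'+1)) = cos (t (4*k0'+4)) * (sin (t (4*k0'+1)) * sin (t (4*k0'+2)) * sin (t (4*k0'+3))) * (\<Prod>p\<in>{1..4*k0'}. sin (t p))"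
      using qc j0 by (intro qc_expand) auto
  qed
  have DD: "L$$(2*j0,2*j0) = complex_of_real (\<Prod>p\<in>{1..4*j0}. sin (t p))"
  proof -
    have "L$$(2*(j-1),2*(j-1)) = complex_of_real (\<Prod>p\<in>{1..4*(j-1)}. sin (\<theta> j p))" using form j2 by blast
    then show ?thesis unfolding t_def using j0 by simp
  qed
  have Lz: "L$$(2*j0,2*k0) = z * complex_of_real Q"
    using HH kj unfolding z_def Q_def by (intro complex_eqI) (auto simp del: of_real_prod)
  have Lw: "L$$(2*j0,2*k0+1) = w * complex_of_real Q"
    using HH kj unfolding w_def Q_def by (intro complex_eqI) (auto simp: algebra_simps simp del: of_real_prod)
  have Lz': "L$$(2*j0+1,2*k0+1) = cnj z * complex_of_real Q" using QB[rule_format, OF j0N k0N] Lz by simp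
  have Lw': "L$$(2*j0+1,2*k0) = - cnj w * complex_of_real Q" using QB[rule_format, OF j0N k0N] Lw by simp
  have S1: "S $$ (2*(j0-k0), 0) = L$$(2*j0,2*k0) * complex_of_real r"
  proof -
    have "S $$ (2*(j0-k0), 0) = (\<Sum>c<2*N-2*k0. L$$(2*k0+2*(j0-k0),2*k0+c) * cnj (L$$(2*k0+0,2*k0+c)))"
      using SC kj by simp
    also have "\<dots> = L$$(2*k0+2*(j0-k0),2*k0+0) * cnj (L$$(2*k0+0,2*k0+0))"
      by (rule sum_first) (use lt kj in auto)
    finally show ?thesis using r A by simp
  qed
  have S2: "S $$ (2*(j0-k0), 1) = L$$(2*j0,2*k0+1) * complex_of_real r"
  proof -
    have "S $$ (2*(j0-k0), 1) = (\<Sum>c<2*N-2*k0. L$$(2*k0+2*(j0-k0),2*k0+c) * cnj (L$$(2*k0+1,2*k0+c)))"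
      using SC kj by simp
    also have "\<dots> = L$$(2*k0+2*(j0-k0),2*k0+1) * cnj (L$$(2*k0+1,2*k0+1))"
      by (rule sum_second) (use lt kj r10 in auto)
    finally show ?thesis using r11 A by simp
  qed
  have S3: "S $$ (2*(j0-k0)+1, 0) = L$$(2*j0+1,2*k0) * complex_of_real r"
  proof -
    have "S $$ (2*(j0-k0)+1, 0) = (\<Sum>c<2*N-2*k0. L$$(2*k0+(2*(j0-k0)+1),2*k0+c) * cnj (L$$(2*k0+0,2*k0+c)))"
      using SC kj by simp
    also have "\<dots> = L$$(2*k0+(2*(j0-k0)+1),2*k0+0) * cnj (L$$(2*k0+0,2*k0+0))"
      by (rule sum_first) (use lt kj in auto)
    finally show ?thesis using r A by simp
  qed
  have S4: "S $$ (2*(j0-k0)+1, 1) = L$$(2*j0+1,2*k0+1) * complex_of_real r"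
  proof -
    have "S $$ (2*(j0-k0)+1, 1) = (\<Sum>c<2*N-2*k0. L$$(2*k0+(2*(j0-k0)+1),2*k0+c) * cnj (L$$(2*k0+1,2*k0+c)))"
      using SC kj by simp
    also have "\<dots> = L$$(2*k0+(2*(j0-k0)+1),2*k0+1) * cnj (L$$(2*k0+1,2*k0+1))"
      by (rule sum_second) (use lt kj r10 in auto)
    finally show ?thesis using r11 A by simp
  qed
  have S00: "S $$ (0, 0) = complex_of_real (r^2)"
  proof -
    have "S $$ (0, 0) = (\<Sum>c<2*N-2*k0. L$$(2*k0+0,2*k0+c) * cnj (L$$(2*k0+0,2*k0+c)))"
      using SC kj by simp
    also have "\<dots> = L$$(2*k0+0,2*k0+0) * cnj (L$$(2*k0+0,2*k0+0))"
      by (rule sum_first) (use lt kj in auto)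
    finally show ?thesis using r by (simp add: power2_eq_square)
  qed
  have SAA: "S $$ (2*(j0-k0), 2*(j0-k0)) = complex_of_real (Q^2)"
  proof -
    have "S $$ (2*(j0-k0), 2*(j0-k0)) = (\<Sum>c<2*N-2*k0. L$$(2*k0+2*(j0-k0),2*k0+c) * cnj (L$$(2*k0+2*(j0-k0),2*k0+c)))"
      using SC kj by simp
    also have "\<dots> = (\<Sum>c<2*N-2*k0. complex_of_real ((cmod (L$$(2*j0,2*k0+c)))^2))"
      unfolding A by (intro sum.cong refl) (simp add: complex_norm_square[symmetric] del: of_real_power)
    also have "\<dots> = complex_of_real (\<Sum>c<2*N-2*k0. (cmod (L$$(2*j0,2*k0+c)))^2)"
      by simp
    also have "(\<Sum>c<2*N-2*k0. (cmod (L$$(2*j0,2*k0+c)))^2) = (\<Sum>c<2*(j0-k0)+1. (cmod (L$$(2*j0,2*k0+c)))^2) + (\<Sum>c<2*N-2*k0-(2*(j0-k0)+1). (cmod (L$$(2*j0,2*k0+((2*(j0-k0)+1)+c))))^2)"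
      by (rule sum_split_nat) (use kj in auto)
    also have "(\<Sum>c<2*N-2*k0-(2*(j0-k0)+1). (cmod (L$$(2*j0,2*k0+((2*(j0-k0)+1)+c))))^2) = 0"
      using lt kj by (intro sum.neutral) auto
    also have "(\<Sum>c<2*(j0-k0)+1. (cmod (L$$(2*j0,2*k0+c)))^2) = Q^2" unfolding Q_def
      by (rule tele_q[where t = t and l = "\<lambda>c. L$$(2*j0,c)"]) (use HH DD kj in auto)
    finally show ?thesis by simp
  qed
  have dd: "sqrt (Re (S $$ (2*(j0-k0), 2*(j0-k0))) * Re (S $$ (0, 0))) = Q * r"
    unfolding S00 SAA using Qpos r by (simp add: real_sqrt_mult)
  have e: "2 * (k - 1) = 2 * k0" "j - k = j0 - k0" "4 * k - 3 = 4 * k0 + 1" "4 * k - 2 = 4 * k0 + 2"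
     "4 * k - 1 = 4 * k0 + 3" "4 * k = 4 * k0 + 4" using k0 j0 by auto
  have main: "S $$ (2*(j0-k0), 0) / complex_of_real (Q * r) = z \<and>
             S $$ (2*(j0-k0), 1) / complex_of_real (Q * r) = w \<and>
             S $$ (2*(j0-k0) + 1, 0) / complex_of_real (Q * r) = - cnj w \<and>
             S $$ (2*(j0-k0) + 1, 1) / complex_of_real (Q * r) = cnj z"
    unfolding S1 S2 S3 S4 Lz Lw Lz' Lw' using Qpos r by (simp add: field_simps)
  show ?thesis unfolding Let_def e(1-5) unfolding e(6) S_def[symmetric] t_def[symmetric] dd z_def[symmetric] w_def[symmetric]
    by (rule main)
qed

theorem mainTheorem7:
  fixes N :: nat
  assumes "N \<ge> 2"
  shows
  \<comment> \<open>complex case\<close>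
  "(\<forall>(R :: complex mat) (L :: complex mat) (\<theta> :: nat \<Rightarrow> nat \<Rightarrow> real).
     R \<in> carrier_mat N N \<and> pos_def_mat R \<and> (\<forall>i < N. R $$ (i, i) = 1) \<and>
     L \<in> carrier_mat N N \<and> (\<forall>i < N. \<forall>j < N. i < j \<longrightarrow> L $$ (i, j) = 0) \<and>
     (\<forall>i < N. \<exists>r > 0. L $$ (i, i) = complex_of_real r) \<and>
     R = L * mat_adjoint L \<and>
     (\<forall>j \<in> {2..N}. \<forall>p \<in> {1..2 * j - 2}. 0 < \<theta> j p \<and> \<theta> j p < pi) \<and>
     (\<forall>j \<in> {2..N}.
        (\<forall>k \<in> {1..j - 1}. L $$ (j - 1, k - 1) =
           (complex_of_real (cos (\<theta> j (2 * k - 1))) +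
            \<i> * complex_of_real (cos (\<theta> j (2 * k)) * sin (\<theta> j (2 * k - 1)))) *
           complex_of_real (\<Prod>p \<in> {1..2 * k - 2}. sin (\<theta> j p))) \<and>
        L $$ (j - 1, j - 1) = complex_of_real (\<Prod>p \<in> {1..2 * j - 2}. sin (\<theta> j p)))
   \<longrightarrow> (\<forall>j k. 1 \<le> k \<and> k < j \<and> j \<le> N \<longrightarrow>
         (let S = schur_compl R (k - 1)
          in S $$ (j - k, 0) /
               complex_of_real (sqrt (Re (S $$ (j - k, j - k)) * Re (S $$ (0, 0))))
             = complex_of_real (cos (\<theta> j (2 * k - 1))) +
               \<i> * complex_of_real (cos (\<theta> j (2 * k)) * sin (\<theta> j (2 * k - 1))))))
  \<and>
  \<comment> \<open>quaternion case\<close>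
  (\<forall>(R :: complex mat) (L :: complex mat) (\<theta> :: nat \<Rightarrow> nat \<Rightarrow> real).
     quat_block_form R N \<and> pos_def_mat R \<and>
     (\<forall>a < N. R $$ (2 * a, 2 * a) = 1 \<and> R $$ (2 * a, 2 * a + 1) = 0) \<and>
     quat_block_form L N \<and>
     (\<forall>a < N. \<forall>b < N. a < b \<longrightarrow> L $$ (2 * a, 2 * b) = 0 \<and> L $$ (2 * a, 2 * b + 1) = 0) \<and>
     (\<forall>a < N. (\<exists>r > 0. L $$ (2 * a, 2 * a) = complex_of_real r) \<and> L $$ (2 * a, 2 * a + 1) = 0) \<and>
     R = L * mat_adjoint L \<and>
     (\<forall>j \<in> {2..N}. \<forall>p \<in> {1..4 * j - 4}. 0 < \<theta> j p \<and> \<theta> j p < pi) \<and>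
     (\<forall>j \<in> {2..N}.
        (\<forall>k \<in> {1..j - 1}. \<forall>s \<in> {1..4}. qcoord L j k s =
           cos (\<theta> j (4 * (k - 1) + s)) *
           (\<Prod>m \<in> {1..s - 1}. sin (\<theta> j (4 * (k - 1) + m))) *
           (\<Prod>p \<in> {1..4 * (k - 1)}. sin (\<theta> j p))) \<and>
        L $$ (2 * (j - 1), 2 * (j - 1)) = complex_of_real (\<Prod>p \<in> {1..4 * (j - 1)}. sin (\<theta> j p)))
   \<longrightarrow> (\<forall>j k. 1 \<le> k \<and> k < j \<and> j \<le> N \<longrightarrow>
         (let S = schur_compl R (2 * (k - 1));
              d = complex_of_real (sqrt (Re (S $$ (2 * (j - k), 2 * (j - k))) * Re (S $$ (0, 0))));
              z = complex_of_real (cos (\<theta> j (4 * k - 3))) +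
                  \<i> * complex_of_real (cos (\<theta> j (4 * k - 2)) * sin (\<theta> j (4 * k - 3)));
              w = (complex_of_real (cos (\<theta> j (4 * k - 1))) +
                   \<i> * complex_of_real (cos (\<theta> j (4 * k)) * sin (\<theta> j (4 * k - 1)))) *
                  complex_of_real (sin (\<theta> j (4 * k - 3)) * sin (\<theta> j (4 * k - 2)))
          in S $$ (2 * (j - k), 0) / d = z \<and>
             S $$ (2 * (j - k), 1) / d = w \<and>
             S $$ (2 * (j - k) + 1, 0) / d = - cnj w \<and>
             S $$ (2 * (j - k) + 1, 1) / d = cnj z)))"
proof (intro conjI allI impI)
  fix R L :: "complex mat" and \<theta> :: "nat \<Rightarrow> nat \<Rightarrow> real" and j k :: nat
  assume H: "R \<in> carrier_mat N N \<and> pos_def_mat R \<and> (\<forall>i < N. R $$ (i, i) = 1) \<and>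
     L \<in> carrier_mat N N \<and> (\<forall>i < N. \<forall>j < N. i < j \<longrightarrow> L $$ (i, j) = 0) \<and>
     (\<forall>i < N. \<exists>r > 0. L $$ (i, i) = complex_of_real r) \<and>
     R = L * mat_adjoint L \<and>
     (\<forall>j \<in> {2..N}. \<forall>p \<in> {1..2 * j - 2}. 0 < \<theta> j p \<and> \<theta> j p < pi) \<and>
     (\<forall>j \<in> {2..N}.
        (\<forall>k \<in> {1..j - 1}. L $$ (j - 1, k - 1) =
           (complex_of_real (cos (\<theta> j (2 * k - 1))) +
            \<i> * complex_of_real (cos (\<theta> j (2 * k)) * sin (\<theta> j (2 * k - 1)))) *
           complex_of_real (\<Prod>p \<in> {1..2 * k - 2}. sin (\<theta> j p))) \<and>
        L $$ (j - 1, j - 1) = complex_of_real (\<Prod>p \<in> {1..2 * j - 2}. sin (\<theta> j p)))"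
    and jk: "1 \<le> k \<and> k < j \<and> j \<le> N"
  show "let S = schur_compl R (k - 1)
          in S $$ (j - k, 0) /
               complex_of_real (sqrt (Re (S $$ (j - k, j - k)) * Re (S $$ (0, 0))))
             = complex_of_real (cos (\<theta> j (2 * k - 1))) +
               \<i> * complex_of_real (cos (\<theta> j (2 * k)) * sin (\<theta> j (2 * k - 1)))"
    by (rule cplx) (use H jk in auto)
next
  fix R L :: "complex mat" and \<theta> :: "nat \<Rightarrow> nat \<Rightarrow> real" and j k :: nat
  assume H: "quat_block_form R N \<and> pos_def_mat R \<and>
     (\<forall>a < N. R $$ (2 * a, 2 * a) = 1 \<and> R $$ (2 * a, 2 * a + 1) = 0) \<and>
     quat_block_form L N \<and>
     (\<forall>a < N. \<forall>b < N. a < b \<longrightarrow> L $$ (2 * a, 2 * b) = 0 \<and> L $$ (2 * a, 2 * b + 1) = 0) \<and>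
     (\<forall>a < N. (\<exists>r > 0. L $$ (2 * a, 2 * a) = complex_of_real r) \<and> L $$ (2 * a, 2 * a + 1) = 0) \<and>
     R = L * mat_adjoint L \<and>
     (\<forall>j \<in> {2..N}. \<forall>p \<in> {1..4 * j - 4}. 0 < \<theta> j p \<and> \<theta> j p < pi) \<and>
     (\<forall>j \<in> {2..N}.
        (\<forall>k \<in> {1..j - 1}. \<forall>s \<in> {1..4}. qcoord L j k s =
           cos (\<theta> j (4 * (k - 1) + s)) *
           (\<Prod>m \<in> {1..s - 1}. sin (\<theta> j (4 * (k - 1) + m))) *
           (\<Prod>p \<in> {1..4 * (k - 1)}. sin (\<theta> j p))) \<and>
        L $$ (2 * (j - 1), 2 * (j - 1)) = complex_of_real (\<Prod>p \<in> {1..4 * (j - 1)}. sin (\<theta> j p)))"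
    and jk: "1 \<le> k \<and> k < j \<and> j \<le> N"
  show "let S = schur_compl R (2 * (k - 1));
              d = complex_of_real (sqrt (Re (S $$ (2 * (j - k), 2 * (j - k))) * Re (S $$ (0, 0))));
              z = complex_of_real (cos (\<theta> j (4 * k - 3))) +
                  \<i> * complex_of_real (cos (\<theta> j (4 * k - 2)) * sin (\<theta> j (4 * k - 3)));
              w = (complex_of_real (cos (\<theta> j (4 * k - 1))) +
                   \<i> * complex_of_real (cos (\<theta> j (4 * k)) * sin (\<theta> j (4 * k - 1)))) *
                  complex_of_real (sin (\<theta> j (4 * k - 3)) * sin (\<theta> j (4 * k - 2)))
          in S $$ (2 * (j - k), 0) / d = z \<and>
             S $$ (2 * (j - k), 1) / d = w \<and>
             S $$ (2 * (j - k) + 1, 0) / d = - cnj w \<and>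
             S $$ (2 * (j - k) + 1, 1) / d = cnj z"
    by (rule quat) (use H jk in auto)
qed

end
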